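(* Let $T$ be a densely defined symmetric operator in a Hilbert space $\mathcal{H}$ with scalar product $(\cdot,\cdot)$, let $g_1,\dots,g_n\in\mathcal{H}$ and set $\mathcal{D}_0:=\{u\in\mathcal{D}(T):(u,g_j)=0,\ j=1,\dots,n\}$. If $x\in\mathcal{H}$ is such that the map $\mathcal{D}_0\to\mathbb{C}$, $u\mapsto(Tu,x)$, is bounded, then $x\in\mathcal{D}(T^* )$. *)

theory Defs
  imports "HOL-Analysis.Analysis"
begin

class complex_vector = real_vector +
  fixes scaleC :: "complex \<Rightarrow> 'a \<Rightarrow> 'a" (infixr "*\<^sub>C" 75)
  assumes scaleC_add_right: "a *\<^sub>C (x + y) = a *\<^sub>C x + a *\<^sub>C y"
    and scaleC_add_left: "(a + b) *\<^sub>C x = a *\<^sub>C x + b *\<^sub>C x"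
    and scaleC_scaleC: "a *\<^sub>C (b *\<^sub>C x) = (a * b) *\<^sub>C x"
    and scaleC_one: "1 *\<^sub>C x = x"
    and scaleR_scaleC: "scaleR r x = of_real r *\<^sub>C x"

class complex_inner = complex_vector + real_normed_vector +
  fixes cinner :: "'a \<Rightarrow> 'a \<Rightarrow> complex"
  assumes cinner_commute: "cinner x y = cnj (cinner y x)"
    and cinner_add_left: "cinner (x + y) z = cinner x z + cinner y z"
    and cinner_scaleC_left: "cinner (r *\<^sub>C x) y = r * cinner x y"
    and cinner_real_nonneg: "Im (cinner x x) = 0 \<and> Re (cinner x x) \<ge> 0"
    and cinner_eq_zero_iff: "cinner x x = 0 \<longleftrightarrow> x = 0"
    and norm_eq_sqrt_cinner: "norm x = sqrt (Re (cinner x x))"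

definition is_operator :: "'a::complex_inner set \<Rightarrow> ('a \<Rightarrow> 'a) \<Rightarrow> bool" where
  "is_operator D T \<longleftrightarrow> 0 \<in> D \<and> (\<forall>u\<in>D. \<forall>v\<in>D. u + v \<in> D) \<and> (\<forall>c. \<forall>u\<in>D. c *\<^sub>C u \<in> D)
     \<and> (\<forall>u\<in>D. \<forall>v\<in>D. T (u + v) = T u + T v) \<and> (\<forall>c. \<forall>u\<in>D. T (c *\<^sub>C u) = c *\<^sub>C T u)"

definition densely_defined :: "'a::complex_inner set \<Rightarrow> bool" where
  "densely_defined D \<longleftrightarrow> closure D = UNIV"

definition symmetric_op :: "'a::complex_inner set \<Rightarrow> ('a \<Rightarrow> 'a) \<Rightarrow> bool" where
  "symmetric_op D T \<longleftrightarrow> (\<forall>u\<in>D. \<forall>v\<in>D. cinner (T u) v = cinner u (T v))"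

definition adjoint_domain :: "'a::complex_inner set \<Rightarrow> ('a \<Rightarrow> 'a) \<Rightarrow> 'a set" where
  "adjoint_domain D T = {x. \<exists>y. \<forall>u\<in>D. cinner (T u) x = cinner u y}"

end

theory Submission
  imports Defs
begin

lemma scaleC_real: "complex_of_real r *\<^sub>C (x::'a::complex_vector) = r *\<^sub>R x"
  by (simp add: scaleR_scaleC)

lemma cinner_add_right: "cinner (x::'a::complex_inner) (y + z) = cinner x y + cinner x z"
  by (metis cinner_add_left cinner_commute complex_cnj_add)

lemma cinner_scaleC_right: "cinner (x::'a::complex_inner) (c *\<^sub>C y) = cnj c * cinner x y"
  by (metis cinner_commute cinner_scaleC_left complex_cnj_mult)

lemma cinner_zero_left[simp]: "cinner (0::'a::complex_inner) y = 0"
  using cinner_add_left[of "0::'a" 0 y] by simp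

lemma cinner_zero_right[simp]: "cinner (x::'a::complex_inner) 0 = 0"
  by (metis cinner_commute cinner_zero_left complex_cnj_zero)

lemma cinner_minus_left: "cinner (- x::'a::complex_inner) y = - cinner x y"
proof -
  have "cinner x y + cinner (-x) y = 0" using cinner_add_left[of x "-x" y] by simp
  thus ?thesis by (rule minus_unique[symmetric])
qed

lemma cinner_minus_right: "cinner (x::'a::complex_inner) (- y) = - cinner x y"
  by (metis cinner_commute cinner_minus_left complex_cnj_minus)

lemma cinner_diff_left: "cinner (x - y::'a::complex_inner) z = cinner x z - cinner y z"
  by (simp only: diff_conv_add_uminus cinner_add_left cinner_minus_left)

lemma cinner_diff_right: "cinner (x::'a::complex_inner) (y - z) = cinner x y - cinner x z"
  by (simp only: diff_conv_add_uminus cinner_add_right cinner_minus_right)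

lemma cinner_self_eq: "cinner (x::'a::complex_inner) x = complex_of_real ((norm x)^2)"
proof -
  have h: "Im (cinner x x) = 0" "0 \<le> Re (cinner x x)" using cinner_real_nonneg by auto
  have "norm x = sqrt (Re (cinner x x))" by (rule norm_eq_sqrt_cinner)
  hence n: "(norm x)^2 = Re (cinner x x)" using h(2) by (simp only: real_sqrt_pow2)
  show ?thesis by (rule complex_eqI) (simp_all only: n h Re_complex_of_real Im_complex_of_real)
qed

lemma norm_sq_Re: "(norm (x::'a::complex_inner))^2 = Re (cinner x x)"
  by (metis cinner_self_eq Re_complex_of_real)

lemma scaleC_zero_right[simp]: "c *\<^sub>C (0::'a::complex_vector) = 0"
  using scaleC_add_right[of c "0::'a" 0] by simp

lemma scaleC_minus_right: "c *\<^sub>C (- x::'a::complex_vector) = - (c *\<^sub>C x)"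
proof -
  have "c *\<^sub>C x + c *\<^sub>C (-x) = 0" using scaleC_add_right[of c x "-x"] by simp
  thus ?thesis by (rule minus_unique[symmetric])
qed

lemma norm_sq_add: "(norm (a + b::'a::complex_inner))^2 = (norm a)^2 + (norm b)^2 + 2 * Re (cinner a b)"
proof -
  have "Re (cinner (a+b) (a+b)) = Re (cinner a a) + Re (cinner b b) + Re (cinner a b) + Re (cinner b a)"
    by (simp add: cinner_add_left cinner_add_right)
  moreover have "Re (cinner b a) = Re (cinner a b)" by (subst cinner_commute) simp
  ultimately show ?thesis by (simp add: norm_sq_Re)
qed

lemma norm_scaleC: "norm (c *\<^sub>C (x::'a::complex_inner)) = cmod c * norm x"
proof -
  have "cinner (c *\<^sub>C x) (c *\<^sub>C x) = (c * cnj c) * cinner x x"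
    by (simp add: cinner_scaleC_left cinner_scaleC_right)
  also have "c * cnj c = complex_of_real ((cmod c)^2)" by (metis complex_norm_square of_real_power)
  finally have e: "cinner (c *\<^sub>C x) (c *\<^sub>C x) = complex_of_real ((cmod c)^2) * cinner x x" .
  have "(norm (c *\<^sub>C x))^2 = Re (cinner (c *\<^sub>C x) (c *\<^sub>C x))" by (rule norm_sq_Re)
  also have "\<dots> = (cmod c)^2 * Re (cinner x x)" by (simp add: e)
  also have "\<dots> = ((cmod c) * norm x)^2" by (simp add: norm_sq_Re power_mult_distrib)
  finally have "(norm (c *\<^sub>C x))^2 = ((cmod c) * norm x)^2" .
  thus ?thesis by (simp add: power2_eq_iff_nonneg)
qed

lemma cs_expand: "Re (cinner (x - c *\<^sub>C y) (x - c *\<^sub>C (y::'a::complex_inner)))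
   = (norm x)^2 - 2 * Re (cnj c * cinner x y) + (cmod c)^2 * (norm y)^2"
proof -
  have "Re (cinner (x - c *\<^sub>C y) (x - c *\<^sub>C y)) = (norm (x + (- (c *\<^sub>C y))))^2"
    by (simp add: norm_sq_Re)
  also have "\<dots> = (norm x)^2 + (norm (- (c *\<^sub>C y)))^2 + 2 * Re (cinner x (- (c *\<^sub>C y)))"
    by (rule norm_sq_add)
  also have "\<dots> = (norm x)^2 - 2 * Re (cnj c * cinner x y) + (cmod c)^2 * (norm y)^2"
    by (simp add: cinner_minus_right cinner_scaleC_right power_mult_distrib norm_scaleC)
  finally show ?thesis .
qed

lemma cauchy_schwarz: "cmod (cinner (x::'a::complex_inner) y) \<le> norm x * norm y"
proof (cases "y = 0")
  case True then show ?thesis by simp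
next
  case False
  define q where "q = (norm y)^2"
  have q: "q > 0" using False by (simp add: q_def)
  define z where "z = cinner x y"
  define c where "c = z / complex_of_real q"
  have "0 \<le> Re (cinner (x - c *\<^sub>C y) (x - c *\<^sub>C y))"
    using cinner_real_nonneg by blast
  also have "\<dots> = (norm x)^2 - 2 * Re (cnj c * z) + (cmod c)^2 * q"
    unfolding z_def q_def by (rule cs_expand)
  finally have i: "0 \<le> (norm x)^2 - 2 * Re (cnj c * z) + (cmod c)^2 * q" .
  have "cnj c * z = (z * cnj z) / complex_of_real q" by (simp add: c_def)
  also have "z * cnj z = complex_of_real ((cmod z)^2)" by (metis complex_norm_square of_real_power)
  finally have "cnj c * z = complex_of_real ((cmod z)^2 / q)" by simp
  hence r1: "Re (cnj c * z) = (cmod z)^2 / q" by simp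
  have "cmod c = cmod z / q" using q by (simp add: c_def norm_divide)
  hence r2: "(cmod c)^2 * q = (cmod z)^2 / q" using q by (simp add: power2_eq_square)
  have "(cmod z)^2 / q \<le> (norm x)^2" using i r1 r2 by linarith
  hence "(cmod z)^2 \<le> (norm x)^2 * q" using q by (simp add: divide_le_eq)
  hence "(cmod z)^2 \<le> (norm x * norm y)^2" by (simp add: q_def power_mult_distrib)
  thus ?thesis using power2_le_imp_le[of "cmod z" "norm x * norm y"] by (simp add: z_def)
qed

definition csub :: "'a::complex_vector set \<Rightarrow> bool" where
  "csub S \<longleftrightarrow> (\<forall>a\<in>S. \<forall>b\<in>S. a + b \<in> S) \<and> (\<forall>c. \<forall>a\<in>S. c *\<^sub>C a \<in> S)"

definition flin :: "'a::complex_vector set \<Rightarrow> ('a \<Rightarrow> complex) \<Rightarrow> bool" where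
  "flin S f \<longleftrightarrow> (\<forall>a\<in>S. \<forall>b\<in>S. f (a + b) = f a + f b) \<and> (\<forall>c. \<forall>a\<in>S. f (c *\<^sub>C a) = c * f a)"

lemma bound_step:
  fixes S :: "'a::complex_inner set"
  assumes S: "csub S" and f: "flin S f"
    and C: "\<forall>u\<in>S. cinner u g = 0 \<longrightarrow> cmod (f u) \<le> C * norm u"
  shows "\<exists>K. \<forall>u\<in>S. cmod (f u) \<le> K * norm u"
proof (cases "\<exists>v\<in>S. cinner v g \<noteq> 0")
  case False then show ?thesis using C by blast
next
  case True
  then obtain v where v: "v \<in> S" "cinner v g \<noteq> 0" by blast
  define w where "w = (1 / cinner v g) *\<^sub>C v"
  have wS: "w \<in> S" using S v unfolding csub_def w_def by blast
  have w1: "cinner w g = 1" using v by (simp add: w_def cinner_scaleC_left)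
  define K where "K = abs C + abs C * norm g * norm w + norm g * cmod (f w)"
  show ?thesis
  proof (intro exI ballI)
    fix u assume u: "u \<in> S"
    define p where "p = cinner u g"
    define u0 where "u0 = u + (- p) *\<^sub>C w"
    have pw: "(- p) *\<^sub>C w \<in> S" using S wS unfolding csub_def by blast
    have u0S: "u0 \<in> S" using S u pw unfolding csub_def u0_def by blast
    have "cinner u0 g = p + (- p) * 1" by (simp add: u0_def p_def cinner_add_left cinner_scaleC_left w1)
    hence "cinner u0 g = 0" by simp
    hence "cmod (f u0) \<le> C * norm u0" using C u0S by blast
    also have "\<dots> \<le> abs C * norm u0" by (simp add: mult_right_mono)
    finally have b0: "cmod (f u0) \<le> abs C * norm u0" .
    have "f u0 = f u + f ((- p) *\<^sub>C w)" using f u pw unfolding flin_def u0_def by blast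
    also have "f ((- p) *\<^sub>C w) = (- p) * f w" using f wS unfolding flin_def by blast
    finally have fu: "f u = f u0 + p * f w" by simp
    have nu0: "norm u0 \<le> norm u + cmod p * norm w"
      using norm_triangle_ineq[of u "(- p) *\<^sub>C w"] by (simp add: u0_def norm_scaleC)
    have pb: "cmod p \<le> norm u * norm g" unfolding p_def by (rule cauchy_schwarz)
    have t0: "cmod (f u) \<le> cmod (f u0) + cmod p * cmod (f w)"
      using norm_triangle_ineq[of "f u0" "p * f w"] by (simp add: fu norm_mult)
    have "cmod p * norm w \<le> norm u * norm g * norm w" by (rule mult_right_mono[OF pb]) simp
    hence "norm u0 \<le> norm u + norm u * norm g * norm w" using nu0 by linarith
    hence "abs C * norm u0 \<le> abs C * (norm u + norm u * norm g * norm w)"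
      by (rule mult_left_mono) simp
    hence t1: "cmod (f u0) \<le> abs C * (norm u + norm u * norm g * norm w)" using b0 by linarith
    have t2: "cmod p * cmod (f w) \<le> norm u * norm g * cmod (f w)" by (rule mult_right_mono[OF pb]) simp
    have e: "abs C * (norm u + norm u * norm g * norm w) + norm u * norm g * cmod (f w) = K * norm u"
      by (simp add: K_def algebra_simps)
    show "cmod (f u) \<le> K * norm u" using t0 t1 t2 e by linarith
  qed
qed

lemma bound_ind:
  fixes g :: "nat \<Rightarrow> 'a::complex_inner"
  shows "csub S \<Longrightarrow> flin S f \<Longrightarrow>
    \<forall>u\<in>{u\<in>S. \<forall>j\<in>{1..m}. cinner u (g j) = 0}. cmod (f u) \<le> C * norm u \<Longrightarrow>
    \<exists>K. \<forall>u\<in>S. cmod (f u) \<le> K * norm u"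
proof (induction m arbitrary: S C)
  case 0 then show ?case by auto
next
  case (Suc m)
  define S' where "S' = {u\<in>S. cinner u (g (Suc m)) = 0}"
  have "csub S'" using Suc.prems(1)
    unfolding csub_def S'_def by (simp add: cinner_add_left cinner_scaleC_left)
  moreover have "flin S' f" using Suc.prems(2) unfolding flin_def S'_def by blast
  moreover have "\<forall>u\<in>{u\<in>S'. \<forall>j\<in>{1..m}. cinner u (g j) = 0}. cmod (f u) \<le> C * norm u"
  proof
    fix u assume u: "u \<in> {u\<in>S'. \<forall>j\<in>{1..m}. cinner u (g j) = 0}"
    have "\<forall>j\<in>{1..Suc m}. cinner u (g j) = 0"
    proof
      fix j assume "j \<in> {1..Suc m}"
      then have "j \<in> {1..m} \<or> j = Suc m" by auto
      then show "cinner u (g j) = 0" using u unfolding S'_def by auto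
    qed
    then show "cmod (f u) \<le> C * norm u" using Suc.prems(3) u unfolding S'_def by blast
  qed
  ultimately obtain K where K: "\<forall>u\<in>S'. cmod (f u) \<le> K * norm u" using Suc.IH by blast
  have "\<forall>u\<in>S. cinner u (g (Suc m)) = 0 \<longrightarrow> cmod (f u) \<le> K * norm u"
    using K unfolding S'_def by blast
  then show ?case by (rule bound_step[OF Suc.prems(1,2)])
qed

lemma quad_zero:
  fixes a b :: real
  assumes "b \<ge> 0" and "\<And>t. 0 \<le> 2*t*a + t^2*b"
  shows "a = 0"
proof (rule ccontr)
  assume a: "a \<noteq> 0"
  define t where "t = - a / (b + 1)"
  have b1: "b + 1 > 0" using assms(1) by simp
  have ts: "t * (b+1) = -a" using b1 by (simp add: t_def)
  have "(2*t*a + t^2*b) * (b+1)^2 = 2*a*(t*(b+1))*(b+1) + (t*(b+1))^2 * b"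
    by (simp add: algebra_simps power2_eq_square)
  also have "\<dots> = - (a^2 * (b+2))" unfolding ts by (simp add: algebra_simps power2_eq_square)
  also have "\<dots> < 0" using a assms(1) by simp
  finally have neg: "(2*t*a + t^2*b) * (b+1)^2 < 0" .
  have "0 \<le> (2*t*a + t^2*b) * (b+1)^2" using assms(2)[of t] by simp
  with neg show False by simp
qed

lemma riesz_min:
  fixes D :: "'a::{complex_inner,complete_space} set"
  assumes D0: "0 \<in> D" and S: "csub D" and f: "flin D f"
    and K: "\<forall>u\<in>D. cmod (f u) \<le> K * norm u"
  shows "\<exists>y. \<forall>v\<in>D. f v = cinner v y"
proof -
  define E where "E = (\<lambda>u. (norm u)^2 - 2 * Re (f u))"
  have Elow: "- (K^2) \<le> E u" if u: "u \<in> D" for u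
  proof -
    have "Re (f u) \<le> K * norm u" using K u abs_Re_le_cmod[of "f u"] by fastforce
    moreover have "0 \<le> (norm u - K)^2" by simp
    moreover have "(norm u - K)^2 = (norm u)^2 + K^2 - 2 * (K * norm u)" by (simp add: power2_diff algebra_simps)
    ultimately show ?thesis unfolding E_def by linarith
  qed
  define m where "m = Inf (E ` D)"
  have bdd: "bdd_below (E ` D)" using Elow unfolding bdd_below_def by auto
  have ne: "E ` D \<noteq> {}" using D0 by auto
  have mle: "m \<le> E u" if "u \<in> D" for u using cInf_lower[OF _ bdd] that m_def by auto
  have "\<forall>k. \<exists>u\<in>D. E u < m + inverse (real (Suc k))"
  proof
    fix k :: nat
    have "Inf (E`D) < m + inverse (real (Suc k))" by (simp add: m_def)
    then obtain z where "z \<in> E`D" "z < m + inverse (real (Suc k))"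
      using cInf_less_iff[OF ne bdd] by blast
    then show "\<exists>u\<in>D. E u < m + inverse (real (Suc k))" by auto
  qed
  then obtain u where uD: "\<And>k. u k \<in> D" and uE: "\<And>k. E (u k) < m + inverse (real (Suc k))"
    by metis
  have mid: "(norm (a - b))^2 \<le> 2*(E a + E b - 2*m)" if a: "a\<in>D" and b: "b\<in>D" for a b
  proof -
    define h where "h = (1/2::real) *\<^sub>R (a+b)"
    have h2: "h = complex_of_real (1/2) *\<^sub>C (a+b)" unfolding h_def by (rule scaleC_real[symmetric])
    have abD: "a + b \<in> D" using S a b by (simp add: csub_def)
    have hD: "h \<in> D" using S abD h2 by (simp add: csub_def)
    have fh: "f h = complex_of_real (1/2) * (f a + f b)"
      using f a b abD by (simp add: h2 flin_def)
    have par: "(norm (a+b))^2 + (norm (a-b))^2 = 2*(norm a)^2 + 2*(norm b)^2"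
      using norm_sq_add[of a b] norm_sq_add[of a "-b"]
      by (simp add: cinner_minus_right)
    have nh: "(norm h)^2 = (norm (a+b))^2/4" by (simp add: h_def power_divide)
    have rh: "Re (f h) = (Re (f a) + Re (f b))/2" by (simp add: fh)
    have "E a + E b = 2 * E h + (norm (a-b))^2/2"
      using par nh rh unfolding E_def by (simp add: field_simps)
    with mle[OF hD] show ?thesis by (simp add: field_simps)
  qed
  have cau: "Cauchy u"
  proof (rule metric_CauchyI)
    fix e :: real assume e: "0 < e"
    obtain N :: nat where N: "4 / e^2 < real N" using reals_Archimedean2 by blast
    show "\<exists>M. \<forall>p\<ge>M. \<forall>q\<ge>M. dist (u p) (u q) < e"
    proof (intro exI allI impI)
      fix p q assume p: "N \<le> p" and q: "N \<le> q"
      have "(norm (u p - u q))^2 \<le> 2*(E (u p) + E (u q) - 2*m)" using mid uD by blast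
      also have "\<dots> < 2 * (inverse (real (Suc p)) + inverse (real (Suc q)))"
        using uE[of p] uE[of q] by argo
      also have "\<dots> \<le> 2 * (inverse (real (Suc N)) + inverse (real (Suc N)))"
        using p q by (intro mult_left_mono add_mono le_imp_inverse_le) auto
      also have "\<dots> = 4 / (real N + 1)" by (simp add: field_simps)
      also have "\<dots> < e^2"
      proof -
        have "4 < e^2 * real N" using N e by (simp add: divide_less_eq mult.commute)
        moreover have "e^2 * real N < e^2 * (real N + 1)" using e by simp
        ultimately have "4 < e^2 * (real N + 1)" by linarith
        moreover have "(0::real) < real N + 1" by simp
        ultimately show ?thesis by (simp add: pos_divide_less_eq)
      qed
      finally have "(norm (u p - u q))^2 < e^2" .
      then show "dist (u p) (u q) < e" using e by (simp add: dist_norm power2_less_imp_less)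
    qed
  qed
  then obtain y where y: "u \<longlonglongrightarrow> y" using Cauchy_convergent_iff convergent_def by blast
  have cont: "(\<lambda>k. cinner v (u k)) \<longlonglongrightarrow> cinner v y" for v
  proof -
    have "(\<lambda>k. u k - y) \<longlonglongrightarrow> 0" using y by (rule LIM_zero)
    hence "(\<lambda>k. norm (u k - y)) \<longlonglongrightarrow> 0" by (rule tendsto_norm_zero)
    hence l0: "(\<lambda>k. norm v * norm (u k - y)) \<longlonglongrightarrow> 0" by (rule tendsto_mult_right_zero)
    have bnd: "\<forall>k. norm (cinner v (u k) - cinner v y) \<le> norm v * norm (u k - y)"
    proof
      fix k
      have "cinner v (u k) - cinner v y = cinner v (u k - y)" by (rule cinner_diff_right[symmetric])
      thus "norm (cinner v (u k) - cinner v y) \<le> norm v * norm (u k - y)"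
        using cauchy_schwarz[of v "u k - y"] by simp
    qed
    have ev: "eventually (\<lambda>k. norm (cinner v (u k) - cinner v y) \<le> norm v * norm (u k - y)) sequentially"
      using bnd by (intro always_eventually) blast
    have "(\<lambda>k. cinner v (u k) - cinner v y) \<longlonglongrightarrow> 0"
      by (rule Lim_null_comparison[OF ev l0])
    thus ?thesis by (rule LIM_zero_cancel)
  qed
  have key: "Re (cinner v y) = Re (f v)" if v: "v \<in> D" for v
  proof -
    define a where "a = Re (cinner v y) - Re (f v)"
    define b where "b = (norm v)^2"
    have ineq: "0 \<le> 2*t*a + t^2*b" for t :: real
    proof -
      have step: "0 \<le> 2*t*(Re (cinner v (u k)) - Re (f v)) + t^2*b + inverse (real (Suc k))" for k
      proof -
        have tv: "t *\<^sub>R v = complex_of_real t *\<^sub>C v" by (simp add: scaleC_real)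
        have tvD: "t *\<^sub>R v \<in> D" using S v tv by (simp add: csub_def)
        have inD: "u k + t *\<^sub>R v \<in> D" using S uD tvD by (simp add: csub_def)
        have fs: "f (u k + t *\<^sub>R v) = f (u k) + complex_of_real t * f v"
          using f uD tvD v by (simp add: flin_def tv)
        have ci: "Re (cinner (u k) (t *\<^sub>R v)) = t * Re (cinner v (u k))"
          by (simp add: tv cinner_scaleC_right) (subst cinner_commute, simp)
        have n1: "(norm (u k + t *\<^sub>R v))^2 = (norm (u k))^2 + (norm (t *\<^sub>R v))^2 + 2 * Re (cinner (u k) (t *\<^sub>R v))"
          by (rule norm_sq_add)
        have n2: "(norm (t *\<^sub>R v))^2 = t^2 * b" by (simp add: b_def power_mult_distrib)
        have r: "Re (f (u k + t *\<^sub>R v)) = Re (f (u k)) + t * Re (f v)" by (simp add: fs)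
        have "E (u k + t *\<^sub>R v) = E (u k) + 2*t*(Re (cinner v (u k)) - Re (f v)) + t^2*b"
          unfolding E_def n1 n2 ci r by (simp add: algebra_simps)
        thus ?thesis using mle[OF inD] uE[of k] by argo
      qed
      have lim: "(\<lambda>k. 2*t*(Re (cinner v (u k)) - Re (f v)) + t^2*b + inverse (real (Suc k)))
          \<longlonglongrightarrow> 2*t*a + t^2*b + 0"
        unfolding a_def by (intro tendsto_intros cont LIMSEQ_inverse_real_of_nat)
      show ?thesis using LIMSEQ_le_const[OF lim] step by auto
    qed
    have "a = 0" by (rule quad_zero[OF _ ineq]) (simp add: b_def)
    thus ?thesis by (simp add: a_def)
  qed
  show ?thesis
  proof (intro exI ballI)
    fix v assume v: "v \<in> D"
    have iv: "\<i> *\<^sub>C v \<in> D" using S v by (simp add: csub_def)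
    have "Re (cinner (\<i> *\<^sub>C v) y) = Re (f (\<i> *\<^sub>C v))" by (rule key[OF iv])
    hence "Im (cinner v y) = Im (f v)" using f v by (simp add: cinner_scaleC_left flin_def)
    moreover have "Re (cinner v y) = Re (f v)" by (rule key[OF v])
    ultimately show "f v = cinner v y" by (simp add: complex_eq_iff)
  qed
qed

theorem lemma9p1:
  fixes D :: "'a::{complex_inner, complete_space} set"
    and T :: "'a \<Rightarrow> 'a"
    and g :: "nat \<Rightarrow> 'a" and n :: nat and x :: 'a
  assumes "is_operator D T"
    and "densely_defined D"
    and "symmetric_op D T"
    and "\<exists>C. \<forall>u\<in>{u\<in>D. \<forall>j\<in>{1..n}. cinner u (g j) = 0}. norm (cinner (T u) x) \<le> C * norm u"
  shows "x \<in> adjoint_domain D T"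
proof -
  define f where "f = (\<lambda>u. cinner (T u) x)"
  have S: "csub D" using assms(1) by (simp add: is_operator_def csub_def)
  have fl: "flin D f" using assms(1)
    by (simp add: is_operator_def flin_def f_def cinner_add_left cinner_scaleC_left)
  have D0: "0 \<in> D" using assms(1) by (simp add: is_operator_def)
  obtain C where "\<forall>u\<in>{u\<in>D. \<forall>j\<in>{1..n}. cinner u (g j) = 0}. cmod (f u) \<le> C * norm u"
    using assms(4) by (auto simp: f_def)
  then obtain K where "\<forall>u\<in>D. cmod (f u) \<le> K * norm u" using bound_ind[OF S fl] by blast
  then obtain y where "\<forall>v\<in>D. f v = cinner v y" using riesz_min[OF D0 S fl] by blast
  thus ?thesis by (auto simp: adjoint_domain_def f_def)
qed

end
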